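(* Let $\mathcal{M}$ be a saturated model of Presburger arithmetic, $\mathcal{M}_0\preceq\mathcal{M}$ a small elementary submodel, and $C\subseteq\mathcal{M}^2$ a $(1,1)$-cell definable over $\mathcal{M}_0$. Let $(a,b)\in C$ with $\dim((a,b)/\mathcal{M}_0)=2$. Then there is a definable box $B$ around $(a,b)$ with $B\subseteq C$.
   Context: Presburger arithmetic is $\mathrm{Th}(\mathbb{Z},+,-,<,0,1,\{\equiv_n\}_n)$. A $B$-linear function is $f(x)=\sum_i s_i\frac{x_i-c_i}{k_i}+\gamma$ with $s_i,k_i,c_i$ integers, $0\le c_i<k_i$, $x_i\equiv_{k_i}c_i$, and $\gamma\in\mathrm{dcl}(B)$. A $B$-definable $1$-cell is an infinite set $\{x: \alpha\ \square_1\ x\ \square_2\ \beta,\ x\equiv_N c\}$ with $\alpha,\beta\in\mathrm{dcl}(B)$, $0\le c<N$ integers and each $\square_j$ either $\le$ or no condition. A $(1,1)$-cell is a set $\{(x,t): x\in D,\ \alpha(x)\ \square_1\ t\ \square_2\ \beta(x),\ t\equiv_N k\}$ with $D$ a $1$-cell, $\alpha,\beta$ $B$-linear functions on $D$, $0\le k<N$ integers, such that the fiber sizes are not uniformly bounded by a natural number. The dimension of a tuple over $\mathcal{M}_0$ is the size of a maximal dcl-independent subset of its coordinates over $\mathcal{M}_0$. A box around a point $p\in\mathcal{M}^n$ is a product $B_1\times\dots\times B_n$ of sets $B_i=\{x:\alpha_i\ \square_1\ x\ \square_2\ \beta_i,\ x\equiv_{N_i}c_i\}$ with $p_i\in B_i$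 and both $[\alpha_i,p_i]$ and $[p_i,\beta_i]$ infinite. *)

theory Defs
  imports Main "HOL-Library.Equipollence"
begin

record 'm pstr =
  carr :: "'m set"
  padd :: "'m \<Rightarrow> 'm \<Rightarrow> 'm"
  psub :: "'m \<Rightarrow> 'm \<Rightarrow> 'm"
  plt  :: "'m \<Rightarrow> 'm \<Rightarrow> bool"
  pzero :: 'm
  pone :: 'm
  pcong :: "nat \<Rightarrow> 'm \<Rightarrow> 'm \<Rightarrow> bool"

datatype ptrm = V nat | Zr | On | Ad ptrm ptrm | Sb ptrm ptrm

datatype pfm = Eq ptrm ptrm | Lt ptrm ptrm | Cg nat ptrm ptrm
  | Neg pfm | Conj pfm pfm | Ex nat pfm

primrec tval :: "'m pstr \<Rightarrow> (nat \<Rightarrow> 'm) \<Rightarrow> ptrm \<Rightarrow> 'm" where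
  "tval M e (V i) = e i"
| "tval M e Zr = pzero M"
| "tval M e On = pone M"
| "tval M e (Ad s t) = padd M (tval M e s) (tval M e t)"
| "tval M e (Sb s t) = psub M (tval M e s) (tval M e t)"

primrec sat :: "'m pstr \<Rightarrow> pfm \<Rightarrow> (nat \<Rightarrow> 'm) \<Rightarrow> bool" where
  "sat M (Eq s t) e = (tval M e s = tval M e t)"
| "sat M (Lt s t) e = plt M (tval M e s) (tval M e t)"
| "sat M (Cg n s t) e = pcong M n (tval M e s) (tval M e t)"
| "sat M (Neg \<phi>) e = (\<not> sat M \<phi> e)"
| "sat M (Conj \<phi> \<psi>) e = (sat M \<phi> e \<and> sat M \<psi> e)"
| "sat M (Ex x \<phi>) e = (\<exists>a\<in>carr M. sat M \<phi> (e(x := a)))"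

primrec fvt :: "ptrm \<Rightarrow> nat set" where
  "fvt (V i) = {i}"
| "fvt Zr = {}"
| "fvt On = {}"
| "fvt (Ad s t) = fvt s \<union> fvt t"
| "fvt (Sb s t) = fvt s \<union> fvt t"

primrec fv :: "pfm \<Rightarrow> nat set" where
  "fv (Eq s t) = fvt s \<union> fvt t"
| "fv (Lt s t) = fvt s \<union> fvt t"
| "fv (Cg n s t) = fvt s \<union> fvt t"
| "fv (Neg \<phi>) = fv \<phi>"
| "fv (Conj \<phi> \<psi>) = fv \<phi> \<union> fv \<psi>"
| "fv (Ex x \<phi>) = fv \<phi> - {x}"

definition Zstr :: "int pstr" where
  "Zstr = \<lparr>carr = UNIV, padd = (+), psub = (-), plt = (<), pzero = 0, pone = 1,
           pcong = (\<lambda>n x y. int n dvd (x - y))\<rparr>"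

definition is_pstruct :: "'m pstr \<Rightarrow> bool" where
  "is_pstruct M \<longleftrightarrow> pzero M \<in> carr M \<and> pone M \<in> carr M \<and>
     (\<forall>x\<in>carr M. \<forall>y\<in>carr M. padd M x y \<in> carr M \<and> psub M x y \<in> carr M)"

definition presburger_model :: "'m pstr \<Rightarrow> bool" where
  "presburger_model M \<longleftrightarrow> is_pstruct M \<and>
     (\<forall>\<phi> e e'. fv \<phi> = {} \<longrightarrow> range e' \<subseteq> carr M \<longrightarrow> (sat Zstr \<phi> e \<longleftrightarrow> sat M \<phi> e'))"

definition elem_sub :: "'m set \<Rightarrow> 'm pstr \<Rightarrow> bool" where
  "elem_sub A M \<longleftrightarrow> A \<subseteq> carr M \<and> A \<noteq> {} \<and> is_pstruct (M\<lparr>carr := A\<rparr>) \<and>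
     (\<forall>\<phi> e. range e \<subseteq> A \<longrightarrow> (sat (M\<lparr>carr := A\<rparr>) \<phi> e \<longleftrightarrow> sat M \<phi> e))"

text \<open>Formula with parameters from A (variable 0 is the free object variable).\<close>

definition params_in :: "'m pstr \<Rightarrow> 'm set \<Rightarrow> pfm \<Rightarrow> (nat \<Rightarrow> 'm) \<Rightarrow> bool" where
  "params_in M A \<phi> e \<longleftrightarrow> range e \<subseteq> carr M \<and> (\<forall>v \<in> fv \<phi> - {0}. e v \<in> A)"

definition saturated :: "'m pstr \<Rightarrow> bool" where
  "saturated M \<longleftrightarrow>
     (\<forall>A p. A \<subseteq> carr M \<longrightarrow> A \<prec> carr M \<longrightarrow>
        (\<forall>(\<phi>, e) \<in> p. params_in M A \<phi> e) \<longrightarrow>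
        (\<forall>q \<subseteq> p. finite q \<longrightarrow> (\<exists>b\<in>carr M. \<forall>(\<phi>, e) \<in> q. sat M \<phi> (e(0 := b)))) \<longrightarrow>
        (\<exists>b\<in>carr M. \<forall>(\<phi>, e) \<in> p. sat M \<phi> (e(0 := b))))"

definition dcl :: "'m pstr \<Rightarrow> 'm set \<Rightarrow> 'm set" where
  "dcl M A = {c \<in> carr M. \<exists>\<phi> e. params_in M A \<phi> e \<and>
                 {x \<in> carr M. sat M \<phi> (e(0 := x))} = {c}}"

definition dcl_indep :: "'m pstr \<Rightarrow> 'm set \<Rightarrow> 'm set \<Rightarrow> bool" where
  "dcl_indep M A S \<longleftrightarrow> (\<forall>s\<in>S. s \<notin> dcl M (A \<union> (S - {s})))"

definition tdim :: "'m pstr \<Rightarrow> 'm set \<Rightarrow> 'm list \<Rightarrow> nat" where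
  "tdim M A xs = Max (card ` {S. S \<subseteq> set xs \<and> dcl_indep M A S})"

definition definable2 :: "'m pstr \<Rightarrow> ('m \<times> 'm) set \<Rightarrow> bool" where
  "definable2 M X \<longleftrightarrow> (\<exists>\<phi> e. range e \<subseteq> carr M \<and>
     X = {(x, y). x \<in> carr M \<and> y \<in> carr M \<and> sat M \<phi> (e(0 := x, 1 := y))})"

definition ple :: "'m pstr \<Rightarrow> 'm \<Rightarrow> 'm \<Rightarrow> bool" where
  "ple M x y \<longleftrightarrow> plt M x y \<or> x = y"

primrec numM :: "'m pstr \<Rightarrow> nat \<Rightarrow> 'm" where
  "numM M 0 = pzero M"
| "numM M (Suc k) = padd M (numM M k) (pone M)"

primrec smul :: "'m pstr \<Rightarrow> nat \<Rightarrow> 'm \<Rightarrow> 'm" where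
  "smul M 0 x = pzero M"
| "smul M (Suc k) x = padd M (smul M k x) x"

definition ismul :: "'m pstr \<Rightarrow> int \<Rightarrow> 'm \<Rightarrow> 'm" where
  "ismul M s x = (if 0 \<le> s then smul M (nat s) x else psub M (pzero M) (smul M (nat (- s)) x))"

text \<open>Optional bounds: None means "no condition".\<close>

definition lowb :: "'m pstr \<Rightarrow> 'm option \<Rightarrow> 'm \<Rightarrow> bool" where
  "lowb M \<alpha> x = (case \<alpha> of None \<Rightarrow> True | Some a \<Rightarrow> ple M a x)"

definition uppb :: "'m pstr \<Rightarrow> 'm option \<Rightarrow> 'm \<Rightarrow> bool" where
  "uppb M \<beta> x = (case \<beta> of None \<Rightarrow> True | Some b \<Rightarrow> ple M x b)"

definition intv :: "'m pstr \<Rightarrow> 'm option \<Rightarrow> 'm option \<Rightarrow> nat \<Rightarrow> nat \<Rightarrow> 'm set" where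
  "intv M \<alpha> \<beta> N c = {x \<in> carr M. lowb M \<alpha> x \<and> uppb M \<beta> x \<and> pcong M N x (numM M c)}"

definition B_definable_1cell :: "'m pstr \<Rightarrow> 'm set \<Rightarrow> 'm set \<Rightarrow> bool" where
  "B_definable_1cell M B D \<longleftrightarrow> (\<exists>\<alpha> \<beta> N c.
     c < N \<and> set_option \<alpha> \<subseteq> dcl M B \<and> set_option \<beta> \<subseteq> dcl M B \<and>
     D = intv M \<alpha> \<beta> N c \<and> infinite D)"

text \<open>A one-variable B-linear function f(x) = s (x - c)/k + gamma, represented by
  (s, k, c, gamma); (x - c)/k is the element y with k y + c = x.\<close>

definition lin_eval :: "'m pstr \<Rightarrow> int \<times> nat \<times> nat \<times> 'm \<Rightarrow> 'm \<Rightarrow> 'm" where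
  "lin_eval M f x = (case f of (s, k, c, \<gamma>) \<Rightarrow>
     padd M (ismul M s (THE y. y \<in> carr M \<and> padd M (smul M k y) (numM M c) = x)) \<gamma>)"

definition B_linear_on :: "'m pstr \<Rightarrow> 'm set \<Rightarrow> 'm set \<Rightarrow> int \<times> nat \<times> nat \<times> 'm \<Rightarrow> bool" where
  "B_linear_on M B D f \<longleftrightarrow> (case f of (s, k, c, \<gamma>) \<Rightarrow>
     c < k \<and> \<gamma> \<in> dcl M B \<and> (\<forall>x\<in>D. pcong M k x (numM M c)))"

definition lowf :: "'m pstr \<Rightarrow> (int \<times> nat \<times> nat \<times> 'm) option \<Rightarrow> 'm \<Rightarrow> 'm \<Rightarrow> bool" where
  "lowf M \<alpha> x t = (case \<alpha> of None \<Rightarrow> True | Some f \<Rightarrow> ple M (lin_eval M f x) t)"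

definition uppf :: "'m pstr \<Rightarrow> (int \<times> nat \<times> nat \<times> 'm) option \<Rightarrow> 'm \<Rightarrow> 'm \<Rightarrow> bool" where
  "uppf M \<beta> x t = (case \<beta> of None \<Rightarrow> True | Some f \<Rightarrow> ple M t (lin_eval M f x))"

definition B_definable_11cell :: "'m pstr \<Rightarrow> 'm set \<Rightarrow> ('m \<times> 'm) set \<Rightarrow> bool" where
  "B_definable_11cell M B C \<longleftrightarrow> (\<exists>D \<alpha> \<beta> N k.
     B_definable_1cell M B D \<and>
     (\<forall>f \<in> set_option \<alpha>. B_linear_on M B D f) \<and>
     (\<forall>f \<in> set_option \<beta>. B_linear_on M B D f) \<and> k < N \<and>
     C = {(x, t). x \<in> D \<and> t \<in> carr M \<and> lowf M \<alpha> x t \<and> uppf M \<beta> x t \<and>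
                  pcong M N t (numM M k)} \<and>
     (\<forall>n::nat. \<exists>x\<in>D. infinite {t. (x, t) \<in> C} \<or> card {t. (x, t) \<in> C} > n))"

definition box_comp :: "'m pstr \<Rightarrow> 'm set \<Rightarrow> 'm \<Rightarrow> bool" where
  "box_comp M S p \<longleftrightarrow> (\<exists>\<alpha> \<beta> N c. c < N \<and>
     set_option \<alpha> \<subseteq> carr M \<and> set_option \<beta> \<subseteq> carr M \<and>
     S = intv M \<alpha> \<beta> N c \<and> p \<in> S \<and>
     infinite {x \<in> carr M. lowb M \<alpha> x \<and> ple M x p} \<and>
     infinite {x \<in> carr M. ple M p x \<and> uppb M \<beta> x})"

definition box_around :: "'m pstr \<Rightarrow> ('m \<times> 'm) set \<Rightarrow> 'm \<times> 'm \<Rightarrow> bool" where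
  "box_around M X p \<longleftrightarrow> (\<exists>S1 S2. X = S1 \<times> S2 \<and> box_comp M S1 (fst p) \<and> box_comp M S2 (snd p))"

end

theory Submission
  imports Defs
begin


declare insert_Diff_if[simp]

definition Or :: "pfm \<Rightarrow> pfm \<Rightarrow> pfm" where "Or p q = Neg (Conj (Neg p) (Neg q))"
definition Imp :: "pfm \<Rightarrow> pfm \<Rightarrow> pfm" where "Imp p q = Neg (Conj p (Neg q))"
definition All :: "nat \<Rightarrow> pfm \<Rightarrow> pfm" where "All x p = Neg (Ex x (Neg p))"
definition Le :: "ptrm \<Rightarrow> ptrm \<Rightarrow> pfm" where "Le s t = Or (Lt s t) (Eq s t)"

primrec numT :: "nat \<Rightarrow> ptrm" where
  "numT 0 = Zr" | "numT (Suc n) = Ad (numT n) On"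
primrec smulT :: "nat \<Rightarrow> ptrm \<Rightarrow> ptrm" where
  "smulT 0 t = Zr" | "smulT (Suc k) t = Ad (smulT k t) t"
definition ismulT :: "int \<Rightarrow> ptrm \<Rightarrow> ptrm" where
  "ismulT s t = (if 0 \<le> s then smulT (nat s) t else Sb Zr (smulT (nat (- s)) t))"

lemma sat_Or[simp]: "sat M (Or p q) e = (sat M p e \<or> sat M q e)" by (simp add: Or_def)
lemma sat_Imp[simp]: "sat M (Imp p q) e = (sat M p e \<longrightarrow> sat M q e)" by (simp add: Imp_def)
lemma sat_All[simp]: "sat M (All x p) e = (\<forall>a\<in>carr M. sat M p (e(x := a)))" by (simp add: All_def)
lemma sat_Le[simp]: "sat M (Le s t) e = ple M (tval M e s) (tval M e t)" by (simp add: Le_def ple_def)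
lemma fv_Or[simp]: "fv (Or p q) = fv p \<union> fv q" by (simp add: Or_def)
lemma fv_Imp[simp]: "fv (Imp p q) = fv p \<union> fv q" by (simp add: Imp_def)
lemma fv_All[simp]: "fv (All x p) = fv p - {x}" by (simp add: All_def)
lemma fv_Le[simp]: "fv (Le s t) = fvt s \<union> fvt t" by (simp add: Le_def)

lemma tval_numT[simp]: "tval M e (numT n) = numM M n" by (induct n) auto
lemma fvt_numT[simp]: "fvt (numT n) = {}" by (induct n) auto
lemma tval_smulT[simp]: "tval M e (smulT k t) = smul M k (tval M e t)" by (induct k) auto
lemma fvt_smulT[simp]: "fvt (smulT k t) = (if k = 0 then {} else fvt t)" by (induct k) auto
lemma tval_ismulT[simp]: "tval M e (ismulT s t) = ismul M s (tval M e t)"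
  by (simp add: ismulT_def ismul_def)
lemma fvt_ismulT[simp]: "fvt (ismulT s t) = (if s = 0 then {} else fvt t)"
  by (simp add: ismulT_def)

lemma Z_simps[simp]: "carr Zstr = UNIV" "padd Zstr = (+)" "psub Zstr = (-)" "plt Zstr = (<)"
  "pzero Zstr = 0" "pone Zstr = 1" "pcong Zstr n x y = (int n dvd (x - y))"
  by (simp_all add: Zstr_def)
lemma ple_Z[simp]: "ple Zstr x y = (x \<le> y)" by (auto simp: ple_def)
lemma numM_Z[simp]: "numM Zstr n = int n" by (induct n) auto
lemma smul_Z[simp]: "smul Zstr k x = int k * x" by (induct k) (auto simp: algebra_simps)
lemma ismul_Z[simp]: "ismul Zstr s x = s * x" by (simp add: ismul_def)

lemma xfer:
  assumes "presburger_model M" "fv \<phi> = {}" "sat Zstr \<phi> (\<lambda>_. 0)"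
  shows "sat M \<phi> (\<lambda>_. pzero M)"
proof -
  have "pzero M \<in> carr M" using assms(1) by (simp add: presburger_model_def is_pstruct_def)
  then show ?thesis using assms unfolding presburger_model_def by force
qed

lemma pst: "presburger_model M \<Longrightarrow> is_pstruct M" by (simp add: presburger_model_def)

lemma carr_ops:
  assumes "presburger_model M"
  shows "pzero M \<in> carr M" "pone M \<in> carr M"
    "x \<in> carr M \<Longrightarrow> y \<in> carr M \<Longrightarrow> padd M x y \<in> carr M"
    "x \<in> carr M \<Longrightarrow> y \<in> carr M \<Longrightarrow> psub M x y \<in> carr M"
  using pst[OF assms] by (auto simp: is_pstruct_def)

lemma numM_carr: "presburger_model M \<Longrightarrow> numM M n \<in> carr M"
  by (induct n) (auto intro: carr_ops)
lemma smul_carr: "presburger_model M \<Longrightarrow> x \<in> carr M \<Longrightarrow> smul M k x \<in> carr M"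
  by (induct k) (auto intro: carr_ops)
lemma ismul_carr: "presburger_model M \<Longrightarrow> x \<in> carr M \<Longrightarrow> ismul M s x \<in> carr M"
  by (auto simp: ismul_def intro: carr_ops smul_carr)

lemma Zdist:
  fixes k :: int
  assumes "k \<ge> 1" "k*ya + c = a" "k*yx + c = x" "a - e \<le> x" "x \<le> a+e"
  shows "\<bar>yx - ya\<bar> \<le> e"
proof -
  have "k*(yx - ya) = x - a" using assms by (simp add: algebra_simps)
  moreover have "\<bar>x - a\<bar> \<le> e" using assms by (simp add: abs_le_iff)
  moreover have "\<bar>k*(yx - ya)\<bar> = k*\<bar>yx - ya\<bar>" using assms(1) by (simp add: abs_mult)
  moreover have "\<bar>yx - ya\<bar> \<le> k*\<bar>yx - ya\<bar>" using assms(1)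
    by (simp add: mult_le_cancel_right1)
  ultimately show ?thesis by linarith
qed

lemma Zlow:
  fixes k m :: int
  assumes "k \<ge> 1" "k*ya + c = a" "k*yx + c = x" "m*e \<le> b - (s*ya + g)" "a - e \<le> x" "x \<le> a+e"
    "b - e \<le> t" "0 \<le> e" "m \<ge> \<bar>s\<bar> + 1"
  shows "s*yx + g \<le> t"
proof -
  have d: "\<bar>yx - ya\<bar> \<le> e" using Zdist assms by blast
  have "s*(yx-ya) \<le> \<bar>s*(yx-ya)\<bar>" by simp
  also have "\<dots> = \<bar>s\<bar>*\<bar>yx-ya\<bar>" by (simp add: abs_mult)
  also have "\<dots> \<le> \<bar>s\<bar>*e" using d by (simp add: mult_left_mono)
  finally have 1: "s*(yx-ya) \<le> \<bar>s\<bar>*e" .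
  have 2: "(\<bar>s\<bar>+1)*e \<le> m*e" using assms by (simp add: mult_right_mono)
  show ?thesis using 1 2 assms(4,7) by (simp add: algebra_simps)
qed

lemma Zupp:
  fixes k m :: int
  assumes "k \<ge> 1" "k*ya + c = a" "k*yx + c = x" "m*e \<le> (s*ya + g) - b" "a - e \<le> x" "x \<le> a+e"
    "t \<le> b + e" "0 \<le> e" "m \<ge> \<bar>s\<bar> + 1"
  shows "t \<le> s*yx + g"
proof -
  have d: "\<bar>yx - ya\<bar> \<le> e" using Zdist assms by blast
  have "-(s*(yx-ya)) \<le> \<bar>s*(yx-ya)\<bar>" by simp
  also have "\<dots> = \<bar>s\<bar>*\<bar>yx-ya\<bar>" by (simp add: abs_mult)
  also have "\<dots> \<le> \<bar>s\<bar>*e" using d by (simp add: mult_left_mono)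
  finally have 1: "-(s*(yx-ya)) \<le> \<bar>s\<bar>*e" .
  have 2: "(\<bar>s\<bar>+1)*e \<le> m*e" using assms by (simp add: mult_right_mono)
  show ?thesis using 1 2 assms(4,7) by (simp add: algebra_simps)
qed

definition big :: "'m pstr \<Rightarrow> 'm \<Rightarrow> bool" where "big M x \<longleftrightarrow> (\<forall>n. plt M (numM M n) x)"

primrec eqs :: "nat \<Rightarrow> pfm" where
  "eqs 0 = Eq (V 0) (numT 0)" | "eqs (Suc n) = Or (eqs n) (Eq (V 0) (numT (Suc n)))"
lemma sat_eqs[simp]: "sat M (eqs n) e = (\<exists>j\<le>n. e 0 = numM M j)"
  by (induct n) (auto simp: le_Suc_eq)
lemma fv_eqs[simp]: "fv (eqs n) = {0}" by (induct n) auto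

section \<open>Transferred facts\<close>

context fixes M :: "'m pstr" assumes PM: "presburger_model M"
begin

lemma T_tri: "x \<in> carr M \<Longrightarrow> y \<in> carr M \<Longrightarrow> plt M x y \<or> x = y \<or> plt M y x"
proof -
  have "sat M (All 1 (All 2 (Or (Lt (V 1) (V 2)) (Or (Eq (V 1) (V 2)) (Lt (V 2) (V 1))))))
     (\<lambda>_. pzero M)" by (rule xfer[OF PM]) (simp, auto)
  note X = this[simplified]
  show "x \<in> carr M \<Longrightarrow> y \<in> carr M \<Longrightarrow> plt M x y \<or> x = y \<or> plt M y x" using X by blast
qed

lemma T_lt_trans: "x \<in> carr M \<Longrightarrow> y \<in> carr M \<Longrightarrow> z \<in> carr M \<Longrightarrow> plt M x y \<Longrightarrow> plt M y z \<Longrightarrow> plt M x z"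
proof -
  have "sat M (All 1 (All 2 (All 3 (Imp (Conj (Lt (V 1) (V 2)) (Lt (V 2) (V 3))) (Lt (V 1) (V 3))))))
     (\<lambda>_. pzero M)" by (rule xfer[OF PM]) (simp, auto)
  note X = this[simplified]
  show "x \<in> carr M \<Longrightarrow> y \<in> carr M \<Longrightarrow> z \<in> carr M \<Longrightarrow> plt M x y \<Longrightarrow> plt M y z \<Longrightarrow> plt M x z" using X by blast
qed

lemma T_irr: "x \<in> carr M \<Longrightarrow> \<not> plt M x x"
proof -
  have "sat M (All 1 (Neg (Lt (V 1) (V 1)))) (\<lambda>_. pzero M)" by (rule xfer[OF PM]) (simp, auto)
  note X = this[simplified]
  show "x \<in> carr M \<Longrightarrow> \<not> plt M x x" using X by blast
qed

lemma T_asym: "x \<in> carr M \<Longrightarrow> y \<in> carr M \<Longrightarrow> plt M x y \<Longrightarrow> \<not> plt M y x"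
  using T_lt_trans[of x y x] T_irr[of x] by blast

lemma T_le_trans: "x \<in> carr M \<Longrightarrow> y \<in> carr M \<Longrightarrow> z \<in> carr M \<Longrightarrow> ple M x y \<Longrightarrow> ple M y z \<Longrightarrow> ple M x z"
  unfolding ple_def using T_lt_trans[of x y z] by auto

lemma T_std: "x \<in> carr M \<Longrightarrow> ple M (pzero M) x \<Longrightarrow> ple M x (numM M n) \<Longrightarrow> \<exists>j\<le>n. x = numM M j"
proof -
  have "sat M (All 0 (Imp (Conj (Le Zr (V 0)) (Le (V 0) (numT n))) (eqs n))) (\<lambda>_. pzero M)"
    by (rule xfer[OF PM]) (simp, auto, metis nat_le_iff int_nat_eq)
  note X = this[simplified]
  show "x \<in> carr M \<Longrightarrow> ple M (pzero M) x \<Longrightarrow> ple M x (numM M n) \<Longrightarrow> \<exists>j\<le>n. x = numM M j" using X by blast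
qed

lemma T_subadd: "x \<in> carr M \<Longrightarrow> y \<in> carr M \<Longrightarrow> psub M x y = z \<Longrightarrow> x = padd M y z"
proof -
  have "sat M (All 1 (All 2 (Eq (V 1) (Ad (V 2) (Sb (V 1) (V 2)))))) (\<lambda>_. pzero M)"
    by (rule xfer[OF PM]) (simp, auto)
  note X = this[simplified]
  show "x \<in> carr M \<Longrightarrow> y \<in> carr M \<Longrightarrow> psub M x y = z \<Longrightarrow> x = padd M y z" using X by blast
qed

lemma T_subsub: "x \<in> carr M \<Longrightarrow> y \<in> carr M \<Longrightarrow> psub M x y = z \<Longrightarrow> y = psub M x z"
proof -
  have "sat M (All 1 (All 2 (Eq (V 2) (Sb (V 1) (Sb (V 1) (V 2)))))) (\<lambda>_. pzero M)"
    by (rule xfer[OF PM]) (simp, auto)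
  note X = this[simplified]
  show "x \<in> carr M \<Longrightarrow> y \<in> carr M \<Longrightarrow> psub M x y = z \<Longrightarrow> y = psub M x z" using X by blast
qed

lemma T_nonneg: "x \<in> carr M \<Longrightarrow> y \<in> carr M \<Longrightarrow> ple M y x \<Longrightarrow> ple M (pzero M) (psub M x y)"
proof -
  have "sat M (All 1 (All 2 (Imp (Le (V 2) (V 1)) (Le Zr (Sb (V 1) (V 2)))))) (\<lambda>_. pzero M)"
    by (rule xfer[OF PM]) (simp, auto)
  note X = this[simplified]
  show "x \<in> carr M \<Longrightarrow> y \<in> carr M \<Longrightarrow> ple M y x \<Longrightarrow> ple M (pzero M) (psub M x y)" using X by blast
qed

lemma T_cong: "x \<in> carr M \<Longrightarrow> pcong M k x (numM M c) \<Longrightarrow> \<exists>y\<in>carr M. padd M (smul M k y) (numM M c) = x"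
proof -
  have "sat M (All 1 (Imp (Cg k (V 1) (numT c)) (Ex 2 (Eq (Ad (smulT k (V 2)) (numT c)) (V 1)))))
     (\<lambda>_. pzero M)"
    by (rule xfer[OF PM]) (simp, auto simp: dvd_def algebra_simps)
  note X = this[simplified]
  show "x \<in> carr M \<Longrightarrow> pcong M k x (numM M c) \<Longrightarrow> \<exists>y\<in>carr M. padd M (smul M k y) (numM M c) = x"
    using X by blast
qed

lemma T_uniq: "0 < k \<Longrightarrow> y \<in> carr M \<Longrightarrow> y' \<in> carr M \<Longrightarrow>
   padd M (smul M k y) (numM M c) = padd M (smul M k y') (numM M c) \<Longrightarrow> y = y'"
proof -
  assume k: "0 < k"
  have "sat M (All 1 (All 2 (Imp (Eq (Ad (smulT k (V 1)) (numT c)) (Ad (smulT k (V 2)) (numT c)))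
      (Eq (V 1) (V 2))))) (\<lambda>_. pzero M)"
    by (rule xfer[OF PM]) (simp, use k in auto)
  note X = this[simplified]
  show "y \<in> carr M \<Longrightarrow> y' \<in> carr M \<Longrightarrow>
   padd M (smul M k y) (numM M c) = padd M (smul M k y') (numM M c) \<Longrightarrow> y = y'" using X by blast
qed

lemma T_div: "0 < m \<Longrightarrow> d \<in> carr M \<Longrightarrow> \<exists>q\<in>carr M. ple M (smul M m q) d \<and> plt M d (padd M (smul M m q) (numM M m))"
proof -
  assume m: "0 < m"
  have "sat M (All 1 (Ex 2 (Conj (Le (smulT m (V 2)) (V 1)) (Lt (V 1) (Ad (smulT m (V 2)) (numT m))))))
     (\<lambda>_. pzero M)"
  proof (rule xfer[OF PM])
    show "sat Zstr (All 1 (Ex 2 (Conj (Le (smulT m (V 2)) (V 1)) (Lt (V 1) (Ad (smulT m (V 2)) (numT m))))))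
      (\<lambda>_. 0)"
    proof (simp, intro allI)
      fix d :: int
      have "int m * (d div int m) + d mod int m = d" by simp
      moreover have "0 \<le> d mod int m" "d mod int m < int m" using m by auto
      ultimately show "\<exists>q. int m * q \<le> d \<and> d < int m * q + int m"
        by (intro exI[of _ "d div int m"]) linarith
    qed
  qed simp
  note X = this[simplified]
  show "d \<in> carr M \<Longrightarrow> \<exists>q\<in>carr M. ple M (smul M m q) d \<and> plt M d (padd M (smul M m q) (numM M m))"
    using X by blast
qed

lemma T_bound: "q \<in> carr M \<Longrightarrow> d \<in> carr M \<Longrightarrow> ple M q (numM M n) \<Longrightarrow>
   plt M d (padd M (smul M m q) (numM M m)) \<Longrightarrow> plt M d (numM M (m*n+m))"
proof -
  have "sat M (All 1 (All 2 (Imp (Conj (Le (V 1) (numT n)) (Lt (V 2) (Ad (smulT m (V 1)) (numT m))))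
     (Lt (V 2) (numT (m*n+m)))))) (\<lambda>_. pzero M)"
  proof (rule xfer[OF PM])
    show "sat Zstr (All 1 (All 2 (Imp (Conj (Le (V 1) (numT n)) (Lt (V 2) (Ad (smulT m (V 1)) (numT m))))
     (Lt (V 2) (numT (m*n+m)))))) (\<lambda>_. 0)"
    proof (simp, intro allI impI, elim conjE)
      fix q d :: int assume "q \<le> int n" "d < int m * q + int m"
      moreover have "int m * q \<le> int m * int n" using \<open>q \<le> int n\<close> by (simp add: mult_left_mono)
      ultimately show "d < int m * int n + int m" by linarith
    qed
  qed simp
  note X = this[simplified]
  show "q \<in> carr M \<Longrightarrow> d \<in> carr M \<Longrightarrow> ple M q (numM M n) \<Longrightarrow>
   plt M d (padd M (smul M m q) (numM M m)) \<Longrightarrow> plt M d (numM M (m*n+m))" using X by blast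
qed

lemma T_num_nonneg: "ple M (pzero M) (numM M n)"
proof -
  have "sat M (Le Zr (numT n)) (\<lambda>_. pzero M)" by (rule xfer[OF PM]) (simp, auto)
  note X = this[simplified]
  show ?thesis using X by blast
qed

lemma T_num_inj: "n \<noteq> n' \<Longrightarrow> numM M n \<noteq> numM M n'"
proof -
  assume "n \<noteq> n'"
  then have "sat M (Neg (Eq (numT n) (numT n'))) (\<lambda>_. pzero M)" by (intro xfer[OF PM]) (simp, auto)
  note X = this[simplified]
  show ?thesis using X by blast
qed

lemma T_box: "a \<in> carr M \<Longrightarrow> e \<in> carr M \<Longrightarrow> z \<in> carr M \<Longrightarrow> ple M (pzero M) z \<Longrightarrow> ple M z e \<Longrightarrow>
  ple M (psub M a e) (psub M a z) \<and> ple M (psub M a z) a \<and> ple M a (padd M a z) \<and> ple M (padd M a z) (padd M a e)"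
proof -
  have "sat M (All 1 (All 2 (All 3 (Imp (Conj (Le Zr (V 3)) (Le (V 3) (V 2)))
     (Conj (Le (Sb (V 1) (V 2)) (Sb (V 1) (V 3))) (Conj (Le (Sb (V 1) (V 3)) (V 1))
      (Conj (Le (V 1) (Ad (V 1) (V 3))) (Le (Ad (V 1) (V 3)) (Ad (V 1) (V 2)))))))))) (\<lambda>_. pzero M)"
    by (rule xfer[OF PM]) (simp, auto)
  note X = this[simplified]
  show "a \<in> carr M \<Longrightarrow> e \<in> carr M \<Longrightarrow> z \<in> carr M \<Longrightarrow> ple M (pzero M) z \<Longrightarrow> ple M z e \<Longrightarrow>
  ple M (psub M a e) (psub M a z) \<and> ple M (psub M a z) a \<and> ple M a (padd M a z) \<and> ple M (padd M a z) (padd M a e)"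
    using X by blast
qed

lemma T_inj: "a \<in> carr M \<Longrightarrow> z \<in> carr M \<Longrightarrow> w \<in> carr M \<Longrightarrow>
   (psub M a z = psub M a w \<longrightarrow> z = w) \<and> (padd M a z = padd M a w \<longrightarrow> z = w)"
proof -
  have "sat M (All 1 (All 2 (All 3 (Conj (Imp (Eq (Sb (V 1) (V 2)) (Sb (V 1) (V 3))) (Eq (V 2) (V 3)))
     (Imp (Eq (Ad (V 1) (V 2)) (Ad (V 1) (V 3))) (Eq (V 2) (V 3))))))) (\<lambda>_. pzero M)"
    by (rule xfer[OF PM]) (simp, auto)
  note X = this[simplified]
  show "a \<in> carr M \<Longrightarrow> z \<in> carr M \<Longrightarrow> w \<in> carr M \<Longrightarrow>
   (psub M a z = psub M a w \<longrightarrow> z = w) \<and> (padd M a z = padd M a w \<longrightarrow> z = w)" using X by blast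
qed

lemma T_lowD: "0 < m \<Longrightarrow> a \<in> carr M \<Longrightarrow> u \<in> carr M \<Longrightarrow> e \<in> carr M \<Longrightarrow> x \<in> carr M \<Longrightarrow>
  ple M (smul M m e) (psub M a u) \<Longrightarrow> ple M (pzero M) e \<Longrightarrow> ple M (psub M a e) x \<Longrightarrow> ple M u x"
proof -
  assume m: "0 < m"
  have "sat M (All 1 (All 2 (All 3 (All 4 (Imp (Conj (Le (smulT m (V 3)) (Sb (V 1) (V 2)))
     (Conj (Le Zr (V 3)) (Le (Sb (V 1) (V 3)) (V 4)))) (Le (V 2) (V 4))))))) (\<lambda>_. pzero M)"
  proof (rule xfer[OF PM])
    show "sat Zstr (All 1 (All 2 (All 3 (All 4 (Imp (Conj (Le (smulT m (V 3)) (Sb (V 1) (V 2)))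
     (Conj (Le Zr (V 3)) (Le (Sb (V 1) (V 3)) (V 4)))) (Le (V 2) (V 4))))))) (\<lambda>_. 0)"
    proof (simp, intro allI impI, elim conjE)
      fix a u e x :: int assume "int m * e \<le> a - u" "0 \<le> e" "a - e \<le> x"
      moreover have "e \<le> int m * e" using m \<open>0 \<le> e\<close> by (simp add: mult_le_cancel_right1)
      ultimately show "u \<le> x" by linarith
    qed
  qed simp
  note X = this[simplified]
  show "a \<in> carr M \<Longrightarrow> u \<in> carr M \<Longrightarrow> e \<in> carr M \<Longrightarrow> x \<in> carr M \<Longrightarrow>
  ple M (smul M m e) (psub M a u) \<Longrightarrow> ple M (pzero M) e \<Longrightarrow> ple M (psub M a e) x \<Longrightarrow> ple M u x" using X by blast
qed

lemma T_uppD: "0 < m \<Longrightarrow> a \<in> carr M \<Longrightarrow> u \<in> carr M \<Longrightarrow> e \<in> carr M \<Longrightarrow> x \<in> carr M \<Longrightarrow>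
  ple M (smul M m e) (psub M u a) \<Longrightarrow> ple M (pzero M) e \<Longrightarrow> ple M x (padd M a e) \<Longrightarrow> ple M x u"
proof -
  assume m: "0 < m"
  have "sat M (All 1 (All 2 (All 3 (All 4 (Imp (Conj (Le (smulT m (V 3)) (Sb (V 2) (V 1)))
     (Conj (Le Zr (V 3)) (Le (V 4) (Ad (V 1) (V 3))))) (Le (V 4) (V 2))))))) (\<lambda>_. pzero M)"
  proof (rule xfer[OF PM])
    show "sat Zstr (All 1 (All 2 (All 3 (All 4 (Imp (Conj (Le (smulT m (V 3)) (Sb (V 2) (V 1)))
     (Conj (Le Zr (V 3)) (Le (V 4) (Ad (V 1) (V 3))))) (Le (V 4) (V 2))))))) (\<lambda>_. 0)"
    proof (simp, intro allI impI, elim conjE)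
      fix a u e x :: int assume "int m * e \<le> u - a" "0 \<le> e" "x \<le> a + e"
      moreover have "e \<le> int m * e" using m \<open>0 \<le> e\<close> by (simp add: mult_le_cancel_right1)
      ultimately show "x \<le> u" by linarith
    qed
  qed simp
  note X = this[simplified]
  show "a \<in> carr M \<Longrightarrow> u \<in> carr M \<Longrightarrow> e \<in> carr M \<Longrightarrow> x \<in> carr M \<Longrightarrow>
  ple M (smul M m e) (psub M u a) \<Longrightarrow> ple M (pzero M) e \<Longrightarrow> ple M x (padd M a e) \<Longrightarrow> ple M x u" using X by blast
qed

end



primrec rent :: "(nat \<Rightarrow> nat) \<Rightarrow> ptrm \<Rightarrow> ptrm" where
  "rent g (V i) = V (g i)" | "rent g Zr = Zr" | "rent g On = On"
| "rent g (Ad s t) = Ad (rent g s) (rent g t)" | "rent g (Sb s t) = Sb (rent g s) (rent g t)"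

primrec renf :: "(nat \<Rightarrow> nat) \<Rightarrow> pfm \<Rightarrow> pfm" where
  "renf g (Eq s t) = Eq (rent g s) (rent g t)"
| "renf g (Lt s t) = Lt (rent g s) (rent g t)"
| "renf g (Cg n s t) = Cg n (rent g s) (rent g t)"
| "renf g (Neg p) = Neg (renf g p)"
| "renf g (Conj p q) = Conj (renf g p) (renf g q)"
| "renf g (Ex x p) = Ex (g x) (renf g p)"

lemma tval_rent[simp]: "tval M e (rent g t) = tval M (e \<circ> g) t" by (induct t) auto
lemma fvt_rent[simp]: "fvt (rent g t) = g ` fvt t" by (induct t) auto

lemma sat_renf: "inj g \<Longrightarrow> sat M (renf g p) e = sat M p (e \<circ> g)"
proof (induct p arbitrary: e)
  case (Ex x p)
  have eq: "\<And>a. (e(g x := a)) \<circ> g = (e \<circ> g)(x := a)"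
    using Ex.prems by (auto simp: fun_eq_iff inj_eq)
  have "sat M (renf g (Ex x p)) e = (\<exists>a\<in>carr M. sat M (renf g p) (e(g x := a)))"
    by (simp only: renf.simps sat.simps)
  also have "\<dots> = (\<exists>a\<in>carr M. sat M p ((e \<circ> g)(x := a)))"
    by (simp only: Ex.hyps[OF Ex.prems] eq)
  also have "\<dots> = sat M (Ex x p) (e \<circ> g)" by (simp only: sat.simps)
  finally show ?case .
qed (simp_all add: comp_def)

lemma fv_renf: "inj g \<Longrightarrow> fv (renf g p) = g ` fv p"
proof (induct p)
  case (Ex x p)
  have "fv (renf g (Ex x p)) = fv (renf g p) - {g x}" by (simp only: renf.simps fv.simps)
  also have "\<dots> = g ` fv p - g ` {x}" using Ex.hyps[OF Ex.prems] by (simp only: image_insert image_empty)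
  also have "\<dots> = g ` (fv p - {x})" using Ex.prems by (rule image_set_diff[symmetric])
  also have "\<dots> = g ` fv (Ex x p)" by (simp only: fv.simps)
  finally show ?case .
qed (simp_all add: image_Un)

lemma params_mono: "params_in M A \<phi> e \<Longrightarrow> A \<subseteq> B \<Longrightarrow> params_in M B \<phi> e"
  unfolding params_in_def by (meson subsetD)

lemma dclI: "c \<in> carr M \<Longrightarrow> params_in M A \<phi> e \<Longrightarrow> {x \<in> carr M. sat M \<phi> (e(0 := x))} = {c} \<Longrightarrow> c \<in> dcl M A"
  unfolding dcl_def by (intro CollectI conjI exI[of _ \<phi>] exI[of _ e]) (assumption, simp, assumption)

lemma dclE: "c \<in> dcl M A \<Longrightarrow> (\<And>\<phi> e. c \<in> carr M \<Longrightarrow> params_in M A \<phi> e \<Longrightarrow> {x \<in> carr M. sat M \<phi> (e(0 := x))} = {c} \<Longrightarrow> P) \<Longrightarrow> P"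
  unfolding dcl_def by (elim CollectE conjE exE) 

lemma dcl_mono: "A \<subseteq> B \<Longrightarrow> dcl M A \<subseteq> dcl M B"
proof
  fix c assume "A \<subseteq> B" "c \<in> dcl M A"
  then show "c \<in> dcl M B" by (elim dclE) (rule dclI, assumption, erule params_mono, assumption, assumption)
qed

lemma dcl_subst:
  assumes u: "u \<in> dcl M A" and j: "j \<noteq> 0"
    and e: "range e \<subseteq> carr M" "\<forall>w\<in>fv \<psi> - {0, j}. e w \<in> A"
    and def: "{x \<in> carr M. sat M \<psi> (e(0 := x, j := u))} = {v}"
  shows "v \<in> dcl M A"
proof -
  obtain \<phi> eu where uc: "u \<in> carr M" and pu: "params_in M A \<phi> eu" and du: "{x \<in> carr M. sat M \<phi> (eu(0 := x))} = {u}"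
    using u by (rule dclE)
  define J where "J = 2*j+2"
  define g1 where "g1 = (\<lambda>w::nat. if w = 0 then J else 2*w+3)"
  define g2 where "g2 = (\<lambda>w::nat. if w = 0 then 0 else 2*w+2)"
  have i1: "inj g1" unfolding inj_def g1_def J_def by presburger
  have i2: "inj g2" unfolding inj_def g2_def by presburger
  define E where "E = (\<lambda>w::nat. if even w then e ((w - 2) div 2) else eu ((w - 3) div 2))"
  define \<Theta> where "\<Theta> = Ex J (Conj (renf g1 \<phi>) (renf g2 \<psi>))"
  have rE: "range E \<subseteq> carr M" using e(1) pu unfolding E_def params_in_def by auto
  have c1: "(E(0 := x, J := z)) \<circ> g1 = eu(0 := z)" for x z
    unfolding g1_def E_def J_def by (auto simp: fun_eq_iff) presburger+
  have c2: "(E(0 := x, J := z)) \<circ> g2 = e(0 := x, j := z)" for x z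
    unfolding g2_def E_def J_def using j by (auto simp: fun_eq_iff)
  have J0: "J \<noteq> 0" unfolding J_def by simp
  have sem: "sat M \<Theta> (E(0 := x)) = sat M \<psi> (e(0 := x, j := u))" for x
  proof -
    have "sat M \<Theta> (E(0 := x)) = (\<exists>z\<in>carr M. sat M \<phi> (eu(0 := z)) \<and> sat M \<psi> (e(0 := x, j := z)))"
      unfolding \<Theta>_def using J0 by (simp add: sat_renf[OF i1] sat_renf[OF i2] c1 c2 fun_upd_twist)
    also have "\<dots> = sat M \<psi> (e(0 := x, j := u))"
    proof
      assume "\<exists>z\<in>carr M. sat M \<phi> (eu(0 := z)) \<and> sat M \<psi> (e(0 := x, j := z))"
      then obtain z where "z \<in> carr M" "sat M \<phi> (eu(0 := z))" "sat M \<psi> (e(0 := x, j := z))" by blast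
      moreover then have "z = u" using du by (metis (mono_tags, lifting) mem_Collect_eq singletonD)
      ultimately show "sat M \<psi> (e(0 := x, j := u))" by simp
    next
      have "sat M \<phi> (eu(0 := u))" using du by blast
      then show "sat M \<psi> (e(0 := x, j := u)) \<Longrightarrow> \<exists>z\<in>carr M. sat M \<phi> (eu(0 := z)) \<and> sat M \<psi> (e(0 := x, j := z))"
        using uc by blast
    qed
    finally show ?thesis .
  qed
  have fvT: "fv \<Theta> = (g1 ` fv \<phi> \<union> g2 ` fv \<psi>) - {J}"
    unfolding \<Theta>_def by (simp add: fv_renf[OF i1] fv_renf[OF i2])
  have "params_in M A \<Theta> E"
    unfolding params_in_def
  proof (intro conjI rE ballI)
    fix w assume w: "w \<in> fv \<Theta> - {0}"
    then consider (a) v where "v \<in> fv \<phi>" "w = g1 v" "w \<noteq> J" | (b) v where "v \<in> fv \<psi>" "w = g2 v" "w \<noteq> J" "w \<noteq> 0"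
      unfolding fvT by blast
    then show "E w \<in> A"
    proof cases
      case a
      then have "v \<noteq> 0" unfolding g1_def by (metis (full_types))
      moreover have "E w = eu v" using a \<open>v \<noteq> 0\<close> unfolding g1_def E_def by simp
      ultimately show ?thesis using a pu unfolding params_in_def by simp
    next
      case b
      have v0: "v \<noteq> 0" proof assume "v = 0" then show False using b unfolding g2_def by simp qed
      have "v \<noteq> j" proof assume "v = j" then show False using b j v0 unfolding g2_def J_def by simp qed
      moreover have "E w = e v" using b v0 unfolding g2_def E_def by simp
      ultimately show ?thesis using b e(2) v0 by simp
    qed
  qed
  moreover have "{x \<in> carr M. sat M \<Theta> (E(0 := x))} = {v}" using def sem by simp
  moreover have "v \<in> carr M" using def by blast
  ultimately show ?thesis by (intro dclI)
qed




context fixes M :: "'m pstr" assumes PM: "presburger_model M"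
begin

lemma zero_dcl: "pzero M \<in> dcl M A"
proof (rule dclI[where \<phi> = "Eq (V 0) Zr" and e = "\<lambda>_. pzero M"])
  show "pzero M \<in> carr M" using carr_ops[OF PM] by simp
  then show "params_in M A (Eq (V 0) Zr) (\<lambda>_. pzero M)" unfolding params_in_def by auto
  show "{x \<in> carr M. sat M (Eq (V 0) Zr) ((\<lambda>_. pzero M)(0 := x))} = {pzero M}"
    using \<open>pzero M \<in> carr M\<close> by auto
qed

lemma ple_refl: "ple M x x" by (simp add: ple_def)

lemma not_big_std:
  assumes d: "d \<in> carr M" "ple M (pzero M) d" and nb: "\<not> big M d"
  shows "\<exists>j. d = numM M j"
proof -
  obtain n where "\<not> plt M (numM M n) d" using nb unfolding big_def by blast
  then have "ple M d (numM M n)" using T_tri[OF PM d(1) numM_carr[OF PM]] unfolding ple_def by blast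
  then show ?thesis using T_std[OF PM d(1) d(2)] by blast
qed

lemma far1:
  assumes u: "u \<in> dcl M A" and v: "v \<in> carr M" "v \<notin> dcl M A" and le: "ple M u v"
  shows "big M (psub M v u)"
proof (rule ccontr)
  assume nb: "\<not> big M (psub M v u)"
  have uc: "u \<in> carr M" using u by (rule dclE)
  have dc: "psub M v u \<in> carr M" using carr_ops[OF PM] uc v by simp
  obtain j where "psub M v u = numM M j"
    using not_big_std[OF dc T_nonneg[OF PM v(1) uc le] nb] by blast
  then have veq: "v = padd M u (numM M j)" using T_subadd[OF PM v(1) uc] by simp
  have "v \<in> dcl M A"
  proof (rule dcl_subst[OF u, where j = 1 and e = "\<lambda>_. pzero M" and \<psi> = "Eq (V 0) (Ad (V 1) (numT j))"])
    show "range (\<lambda>_. pzero M) \<subseteq> carr M" using carr_ops[OF PM] by auto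
    show "\<forall>w\<in>fv (Eq (V 0) (Ad (V 1) (numT j))) - {0, 1}. pzero M \<in> A" by simp
    show "{x \<in> carr M. sat M (Eq (V 0) (Ad (V 1) (numT j))) ((\<lambda>_. pzero M)(0 := x, 1 := u))} = {v}"
      using veq v(1) by auto
  qed simp
  then show False using v(2) by simp
qed

lemma far2:
  assumes u: "u \<in> dcl M A" and v: "v \<in> carr M" "v \<notin> dcl M A" and le: "ple M v u"
  shows "big M (psub M u v)"
proof (rule ccontr)
  assume nb: "\<not> big M (psub M u v)"
  have uc: "u \<in> carr M" using u by (rule dclE)
  have dc: "psub M u v \<in> carr M" using carr_ops[OF PM] uc v by simp
  obtain j where "psub M u v = numM M j"
    using not_big_std[OF dc T_nonneg[OF PM uc v(1) le] nb] by blast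
  then have veq: "v = psub M u (numM M j)" using T_subsub[OF PM uc v(1)] by simp
  have "v \<in> dcl M A"
  proof (rule dcl_subst[OF u, where j = 1 and e = "\<lambda>_. pzero M" and \<psi> = "Eq (V 0) (Sb (V 1) (numT j))"])
    show "range (\<lambda>_. pzero M) \<subseteq> carr M" using carr_ops[OF PM] by auto
    show "\<forall>w\<in>fv (Eq (V 0) (Sb (V 1) (numT j))) - {0, 1}. pzero M \<in> A" by simp
    show "{x \<in> carr M. sat M (Eq (V 0) (Sb (V 1) (numT j))) ((\<lambda>_. pzero M)(0 := x, 1 := u))} = {v}"
      using veq v(1) by auto
  qed simp
  then show False using v(2) by simp
qed

lemma the_y:
  assumes x: "x \<in> carr M" "pcong M k x (numM M c)" and k: "c < k"
  defines "y0 \<equiv> THE y. y \<in> carr M \<and> padd M (smul M k y) (numM M c) = x"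
  shows "y0 \<in> carr M \<and> padd M (smul M k y0) (numM M c) = x"
    "\<And>y. y \<in> carr M \<Longrightarrow> padd M (smul M k y) (numM M c) = x \<Longrightarrow> y = y0"
proof -
  obtain y where y: "y \<in> carr M" "padd M (smul M k y) (numM M c) = x" using T_cong[OF PM x] by blast
  have un: "\<And>y'. y' \<in> carr M \<and> padd M (smul M k y') (numM M c) = x \<Longrightarrow> y' = y"
  proof -
    fix y' assume "y' \<in> carr M \<and> padd M (smul M k y') (numM M c) = x"
    moreover have "0 < k" using k by simp
    ultimately show "y' = y" using T_uniq[OF PM \<open>0 < k\<close> _ y(1), of y' c] y(2) by simp
  qed
  have "y0 = y" unfolding y0_def
  proof (rule the_equality)
    show "y \<in> carr M \<and> padd M (smul M k y) (numM M c) = x" using y by (rule conjI)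
  qed (rule un)
  then show "y0 \<in> carr M \<and> padd M (smul M k y0) (numM M c) = x" using y by simp
  show "\<And>y'. y' \<in> carr M \<Longrightarrow> padd M (smul M k y') (numM M c) = x \<Longrightarrow> y' = y0"
  proof -
    fix y' assume "y' \<in> carr M" "padd M (smul M k y') (numM M c) = x"
    then have "y' = y" using un by simp
    then show "y' = y0" using \<open>y0 = y\<close> by simp
  qed
qed

lemma far3:
  assumes g: "\<gamma> \<in> dcl M A" and aA: "a \<in> A" and a: "a \<in> carr M" "pcong M k a (numM M c)" and k: "c < k"
    and b: "b \<in> carr M" "b \<notin> dcl M A" and le: "ple M (lin_eval M (s, k, c, \<gamma>) a) b"
  shows "big M (psub M b (lin_eval M (s, k, c, \<gamma>) a))"
proof (rule ccontr)
  define y0 where "y0 = (THE y. y \<in> carr M \<and> padd M (smul M k y) (numM M c) = a)"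
  have y0: "y0 \<in> carr M \<and> padd M (smul M k y0) (numM M c) = a" using the_y(1)[OF a k] unfolding y0_def .
  have y0u: "\<And>y. y \<in> carr M \<Longrightarrow> padd M (smul M k y) (numM M c) = a \<Longrightarrow> y = y0"
    using the_y(2)[OF a k] unfolding y0_def by simp
  have gc: "\<gamma> \<in> carr M" using g by (rule dclE)
  define L where "L = padd M (ismul M s y0) \<gamma>"
  have Ldef: "lin_eval M (s, k, c, \<gamma>) a = L" unfolding L_def y0_def lin_eval_def by simp
  have Lc: "L \<in> carr M" unfolding L_def using carr_ops[OF PM] ismul_carr[OF PM] y0 gc by simp
  assume nb: "\<not> big M (psub M b (lin_eval M (s, k, c, \<gamma>) a))"
  have dc: "psub M b L \<in> carr M" using carr_ops[OF PM] Lc b by simp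
  have le': "ple M L b" using le Ldef by simp
  have nb': "\<not> big M (psub M b L)" using nb Ldef by simp
  obtain j where "psub M b L = numM M j"
    using not_big_std[OF dc T_nonneg[OF PM b(1) Lc le'] nb'] by blast
  then have beq: "b = padd M L (numM M j)" using T_subadd[OF PM b(1) Lc] by simp
  define \<psi> where "\<psi> = Ex 3 (Conj (Eq (Ad (smulT k (V 3)) (numT c)) (V 1)) (Eq (V 0) (Ad (Ad (ismulT s (V 3)) (V 2)) (numT j))))"
  define e where "e = (\<lambda>_::nat. pzero M)(1 := a)"
  have "b \<in> dcl M A"
  proof (rule dcl_subst[OF g, where j = 2 and e = e and \<psi> = \<psi>])
    show "range e \<subseteq> carr M" unfolding e_def using carr_ops[OF PM] a by auto
    have "fv \<psi> \<subseteq> {0, 1, 2}" unfolding \<psi>_def by auto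
    then show "\<forall>w\<in>fv \<psi> - {0, 2}. e w \<in> A" unfolding e_def using aA by auto
    have "sat M \<psi> (e(0 := x, 2 := \<gamma>)) = (\<exists>y\<in>carr M. padd M (smul M k y) (numM M c) = a \<and> x = padd M (padd M (ismul M s y) \<gamma>) (numM M j))" for x
      unfolding \<psi>_def e_def by simp
    also have "\<dots>x = (x = b)" for x
    proof
      assume "\<exists>y\<in>carr M. padd M (smul M k y) (numM M c) = a \<and> x = padd M (padd M (ismul M s y) \<gamma>) (numM M j)"
      then obtain y where "y \<in> carr M" "padd M (smul M k y) (numM M c) = a" "x = padd M (padd M (ismul M s y) \<gamma>) (numM M j)" by blast
      moreover then have "y = y0" using y0u by simp
      ultimately show "x = b" using beq L_def by simp
    next
      assume "x = b"
      then show "\<exists>y\<in>carr M. padd M (smul M k y) (numM M c) = a \<and> x = padd M (padd M (ismul M s y) \<gamma>) (numM M j)"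
        using y0 beq L_def by blast
    qed
    finally show "{x \<in> carr M. sat M \<psi> (e(0 := x, 2 := \<gamma>))} = {b}" using b(1) by auto
  qed simp
  then show False using b(2) by simp
qed

lemma far4:
  assumes g: "\<gamma> \<in> dcl M A" and aA: "a \<in> A" and a: "a \<in> carr M" "pcong M k a (numM M c)" and k: "c < k"
    and b: "b \<in> carr M" "b \<notin> dcl M A" and le: "ple M b (lin_eval M (s, k, c, \<gamma>) a)"
  shows "big M (psub M (lin_eval M (s, k, c, \<gamma>) a) b)"
proof (rule ccontr)
  define y0 where "y0 = (THE y. y \<in> carr M \<and> padd M (smul M k y) (numM M c) = a)"
  have y0: "y0 \<in> carr M \<and> padd M (smul M k y0) (numM M c) = a" using the_y(1)[OF a k] unfolding y0_def .
  have y0u: "\<And>y. y \<in> carr M \<Longrightarrow> padd M (smul M k y) (numM M c) = a \<Longrightarrow> y = y0"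
    using the_y(2)[OF a k] unfolding y0_def by simp
  have gc: "\<gamma> \<in> carr M" using g by (rule dclE)
  define L where "L = padd M (ismul M s y0) \<gamma>"
  have Ldef: "lin_eval M (s, k, c, \<gamma>) a = L" unfolding L_def y0_def lin_eval_def by simp
  have Lc: "L \<in> carr M" unfolding L_def using carr_ops[OF PM] ismul_carr[OF PM] y0 gc by simp
  assume nb: "\<not> big M (psub M (lin_eval M (s, k, c, \<gamma>) a) b)"
  have dc: "psub M L b \<in> carr M" using carr_ops[OF PM] Lc b by simp
  have le': "ple M b L" using le Ldef by simp
  have nb': "\<not> big M (psub M L b)" using nb Ldef by simp
  obtain j where "psub M L b = numM M j"
    using not_big_std[OF dc T_nonneg[OF PM Lc b(1) le'] nb'] by blast
  then have beq: "b = psub M L (numM M j)" using T_subsub[OF PM Lc b(1)] by simp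
  define \<psi> where "\<psi> = Ex 3 (Conj (Eq (Ad (smulT k (V 3)) (numT c)) (V 1)) (Eq (V 0) (Sb (Ad (ismulT s (V 3)) (V 2)) (numT j))))"
  define e where "e = (\<lambda>_::nat. pzero M)(1 := a)"
  have "b \<in> dcl M A"
  proof (rule dcl_subst[OF g, where j = 2 and e = e and \<psi> = \<psi>])
    show "range e \<subseteq> carr M" unfolding e_def using carr_ops[OF PM] a by auto
    have "fv \<psi> \<subseteq> {0, 1, 2}" unfolding \<psi>_def by auto
    then show "\<forall>w\<in>fv \<psi> - {0, 2}. e w \<in> A" unfolding e_def using aA by auto
    have "sat M \<psi> (e(0 := x, 2 := \<gamma>)) = (\<exists>y\<in>carr M. padd M (smul M k y) (numM M c) = a \<and> x = psub M (padd M (ismul M s y) \<gamma>) (numM M j))" for x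
      unfolding \<psi>_def e_def by simp
    also have "\<dots>x = (x = b)" for x
    proof
      assume "\<exists>y\<in>carr M. padd M (smul M k y) (numM M c) = a \<and> x = psub M (padd M (ismul M s y) \<gamma>) (numM M j)"
      then obtain y where "y \<in> carr M" "padd M (smul M k y) (numM M c) = a" "x = psub M (padd M (ismul M s y) \<gamma>) (numM M j)" by blast
      moreover then have "y = y0" using y0u by simp
      ultimately show "x = b" using beq L_def by simp
    next
      assume "x = b"
      then show "\<exists>y\<in>carr M. padd M (smul M k y) (numM M c) = a \<and> x = psub M (padd M (ismul M s y) \<gamma>) (numM M j)"
        using y0 beq L_def by blast
    qed
    finally show "{x \<in> carr M. sat M \<psi> (e(0 := x, 2 := \<gamma>))} = {b}" using b(1) by auto
  qed simp
  then show False using b(2) by simp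
qed

lemma list_min: "xs \<noteq> [] \<Longrightarrow> set xs \<subseteq> carr M \<Longrightarrow> \<exists>dm\<in>set xs. \<forall>d\<in>set xs. ple M dm d"
proof (induct xs)
  case Nil then show ?case by simp
next
  case (Cons x xs)
  show ?case
  proof (cases "xs = []")
    case True then show ?thesis using ple_refl by simp
  next
    case False
    then obtain dm where dm: "dm \<in> set xs" "\<forall>d\<in>set xs. ple M dm d" using Cons by auto
    have xc: "x \<in> carr M" and dc: "dm \<in> carr M" using Cons.prems dm(1) by auto
    have sc: "set xs \<subseteq> carr M" using Cons.prems by simp
    show ?thesis
    proof (cases "plt M dm x")
      case True
      then have "ple M dm x" by (simp add: ple_def)
      then have "\<forall>d\<in>set (x # xs). ple M dm d" using dm by simp
      then show ?thesis using dm(1) by (meson list.set_intros(2))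
    next
      case False
      then have "ple M x dm" using T_tri[OF PM xc dc] by (auto simp: ple_def)
      then have "\<forall>d\<in>set xs. ple M x d" using dm(2) T_le_trans[OF PM xc dc] sc by blast
      then show ?thesis using ple_refl by simp
    qed
  qed
qed

lemma get_e:
  assumes ne: "ds \<noteq> []" and ds: "\<forall>d\<in>set ds. d \<in> carr M \<and> big M d" and m: "0 < m"
  shows "\<exists>e\<in>carr M. big M e \<and> (\<forall>d\<in>set ds. ple M (smul M m e) d)"
proof -
  have sc: "set ds \<subseteq> carr M" using ds by blast
  obtain dm where dm: "dm \<in> set ds" "\<forall>d\<in>set ds. ple M dm d" using list_min[OF ne sc] by blast
  have dmc: "dm \<in> carr M" and bdm: "big M dm" using ds dm(1) by auto
  obtain q where q: "q \<in> carr M" "ple M (smul M m q) dm" "plt M dm (padd M (smul M m q) (numM M m))"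
    using T_div[OF PM m dmc] by blast
  have "big M q" unfolding big_def
  proof
    fix n
    show "plt M (numM M n) q"
    proof (rule ccontr)
      assume "\<not> plt M (numM M n) q"
      then have "ple M q (numM M n)" using T_tri[OF PM q(1) numM_carr[OF PM]] by (auto simp: ple_def)
      then have "plt M dm (numM M (m*n+m))" using T_bound[OF PM q(1) dmc _ q(3)] by simp
      moreover have "plt M (numM M (m*n+m)) dm" using bdm unfolding big_def by simp
      ultimately show False using T_asym[OF PM dmc numM_carr[OF PM]] by simp
    qed
  qed
  moreover have "\<forall>d\<in>set ds. ple M (smul M m q) d"
  proof
    fix d assume "d \<in> set ds"
    then have "d \<in> carr M" "ple M dm d" using ds dm by auto
    then show "ple M (smul M m q) d" using T_le_trans[OF PM smul_carr[OF PM q(1)] dmc] q(2) by simp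
  qed
  ultimately show ?thesis using q(1) by blast
qed

lemma T_lowf:
  assumes kk: "1 \<le> kk" and ms: "\<bar>s\<bar> + 1 \<le> int m"
  shows "a \<in> carr M \<Longrightarrow> x \<in> carr M \<Longrightarrow> ya \<in> carr M \<Longrightarrow> yx \<in> carr M \<Longrightarrow> g \<in> carr M \<Longrightarrow>
    b \<in> carr M \<Longrightarrow> t \<in> carr M \<Longrightarrow> e \<in> carr M \<Longrightarrow>
    padd M (smul M kk ya) (numM M cc) = a \<Longrightarrow> padd M (smul M kk yx) (numM M cc) = x \<Longrightarrow>
    ple M (smul M m e) (psub M b (padd M (ismul M s ya) g)) \<Longrightarrow> ple M (psub M a e) x \<Longrightarrow>
    ple M x (padd M a e) \<Longrightarrow> ple M (psub M b e) t \<Longrightarrow> ple M (pzero M) e \<Longrightarrow>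
    ple M (padd M (ismul M s yx) g) t"
proof -
  have "sat M (All 1 (All 2 (All 3 (All 4 (All 5 (All 6 (All 7 (All 8 (Imp
     (Conj (Eq (Ad (smulT kk (V 3)) (numT cc)) (V 1)) (Conj (Eq (Ad (smulT kk (V 4)) (numT cc)) (V 2))
     (Conj (Le (smulT m (V 8)) (Sb (V 6) (Ad (ismulT s (V 3)) (V 5)))) (Conj (Le (Sb (V 1) (V 8)) (V 2))
     (Conj (Le (V 2) (Ad (V 1) (V 8))) (Conj (Le (Sb (V 6) (V 8)) (V 7)) (Le Zr (V 8))))))))
     (Le (Ad (ismulT s (V 4)) (V 5)) (V 7))))))))))) (\<lambda>_. pzero M)"
  proof (rule xfer[OF PM])
    show "sat Zstr (All 1 (All 2 (All 3 (All 4 (All 5 (All 6 (All 7 (All 8 (Imp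
     (Conj (Eq (Ad (smulT kk (V 3)) (numT cc)) (V 1)) (Conj (Eq (Ad (smulT kk (V 4)) (numT cc)) (V 2))
     (Conj (Le (smulT m (V 8)) (Sb (V 6) (Ad (ismulT s (V 3)) (V 5)))) (Conj (Le (Sb (V 1) (V 8)) (V 2))
     (Conj (Le (V 2) (Ad (V 1) (V 8))) (Conj (Le (Sb (V 6) (V 8)) (V 7)) (Le Zr (V 8))))))))
     (Le (Ad (ismulT s (V 4)) (V 5)) (V 7))))))))))) (\<lambda>_. 0)"
    proof (simp only: sat_All sat_Imp sat.simps sat_Le tval.simps tval_numT tval_smulT tval_ismulT
        Z_simps ple_Z numM_Z smul_Z ismul_Z fun_upd_apply, intro ballI impI, elim conjE)
      fix a x ya yx g b t e :: int
      assume h: "int kk * ya + int cc = a" "int kk * yx + int cc = x" "int m * e \<le> b - (s * ya + g)"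
        "a - e \<le> x" "x \<le> a + e" "b - e \<le> t" "0 \<le> e"
      show "s * yx + g \<le> t" by (rule Zlow[OF _ h(1,2,3,4,5,6,7)]) (use kk ms in auto)
    qed
  qed simp
  note X = this[simplified]
  show "a \<in> carr M \<Longrightarrow> x \<in> carr M \<Longrightarrow> ya \<in> carr M \<Longrightarrow> yx \<in> carr M \<Longrightarrow> g \<in> carr M \<Longrightarrow>
    b \<in> carr M \<Longrightarrow> t \<in> carr M \<Longrightarrow> e \<in> carr M \<Longrightarrow>
    padd M (smul M kk ya) (numM M cc) = a \<Longrightarrow> padd M (smul M kk yx) (numM M cc) = x \<Longrightarrow>
    ple M (smul M m e) (psub M b (padd M (ismul M s ya) g)) \<Longrightarrow> ple M (psub M a e) x \<Longrightarrow>
    ple M x (padd M a e) \<Longrightarrow> ple M (psub M b e) t \<Longrightarrow> ple M (pzero M) e \<Longrightarrow>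
    ple M (padd M (ismul M s yx) g) t"
    using X by blast
qed

lemma T_uppf:
  assumes kk: "1 \<le> kk" and ms: "\<bar>s\<bar> + 1 \<le> int m"
  shows "a \<in> carr M \<Longrightarrow> x \<in> carr M \<Longrightarrow> ya \<in> carr M \<Longrightarrow> yx \<in> carr M \<Longrightarrow> g \<in> carr M \<Longrightarrow>
    b \<in> carr M \<Longrightarrow> t \<in> carr M \<Longrightarrow> e \<in> carr M \<Longrightarrow>
    padd M (smul M kk ya) (numM M cc) = a \<Longrightarrow> padd M (smul M kk yx) (numM M cc) = x \<Longrightarrow>
    ple M (smul M m e) (psub M (padd M (ismul M s ya) g) b) \<Longrightarrow> ple M (psub M a e) x \<Longrightarrow>
    ple M x (padd M a e) \<Longrightarrow> ple M t (padd M b e) \<Longrightarrow> ple M (pzero M) e \<Longrightarrow>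
    ple M t (padd M (ismul M s yx) g)"
proof -
  have "sat M (All 1 (All 2 (All 3 (All 4 (All 5 (All 6 (All 7 (All 8 (Imp
     (Conj (Eq (Ad (smulT kk (V 3)) (numT cc)) (V 1)) (Conj (Eq (Ad (smulT kk (V 4)) (numT cc)) (V 2))
     (Conj (Le (smulT m (V 8)) (Sb (Ad (ismulT s (V 3)) (V 5)) (V 6))) (Conj (Le (Sb (V 1) (V 8)) (V 2))
     (Conj (Le (V 2) (Ad (V 1) (V 8))) (Conj (Le (V 7) (Ad (V 6) (V 8))) (Le Zr (V 8))))))))
     (Le (V 7) (Ad (ismulT s (V 4)) (V 5)))))))))))) (\<lambda>_. pzero M)"
  proof (rule xfer[OF PM])
    show "sat Zstr (All 1 (All 2 (All 3 (All 4 (All 5 (All 6 (All 7 (All 8 (Imp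
     (Conj (Eq (Ad (smulT kk (V 3)) (numT cc)) (V 1)) (Conj (Eq (Ad (smulT kk (V 4)) (numT cc)) (V 2))
     (Conj (Le (smulT m (V 8)) (Sb (Ad (ismulT s (V 3)) (V 5)) (V 6))) (Conj (Le (Sb (V 1) (V 8)) (V 2))
     (Conj (Le (V 2) (Ad (V 1) (V 8))) (Conj (Le (V 7) (Ad (V 6) (V 8))) (Le Zr (V 8))))))))
     (Le (V 7) (Ad (ismulT s (V 4)) (V 5)))))))))))) (\<lambda>_. 0)"
    proof (simp only: sat_All sat_Imp sat.simps sat_Le tval.simps tval_numT tval_smulT tval_ismulT
        Z_simps ple_Z numM_Z smul_Z ismul_Z fun_upd_apply, intro ballI impI, elim conjE)
      fix a x ya yx g b t e :: int
      assume h: "int kk * ya + int cc = a" "int kk * yx + int cc = x" "int m * e \<le> s * ya + g - b"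
        "a - e \<le> x" "x \<le> a + e" "t \<le> b + e" "0 \<le> e"
      show "t \<le> s * yx + g" by (rule Zupp[OF _ h(1,2,3,4,5,6,7)]) (use kk ms in auto)
    qed
  qed simp
  note X = this[simplified]
  show "a \<in> carr M \<Longrightarrow> x \<in> carr M \<Longrightarrow> ya \<in> carr M \<Longrightarrow> yx \<in> carr M \<Longrightarrow> g \<in> carr M \<Longrightarrow>
    b \<in> carr M \<Longrightarrow> t \<in> carr M \<Longrightarrow> e \<in> carr M \<Longrightarrow>
    padd M (smul M kk ya) (numM M cc) = a \<Longrightarrow> padd M (smul M kk yx) (numM M cc) = x \<Longrightarrow>
    ple M (smul M m e) (psub M (padd M (ismul M s ya) g) b) \<Longrightarrow> ple M (psub M a e) x \<Longrightarrow>
    ple M x (padd M a e) \<Longrightarrow> ple M t (padd M b e) \<Longrightarrow> ple M (pzero M) e \<Longrightarrow>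
    ple M t (padd M (ismul M s yx) g)"
    using X by blast
qed

lemma big_nonneg: "big M e \<Longrightarrow> ple M (pzero M) e"
  unfolding big_def ple_def by (metis numM.simps(1))

lemma box_ok:
  assumes p: "p \<in> carr M" and e: "e \<in> carr M" "big M e" and pc: "pcong M Nn p (numM M c)" and c: "c < Nn"
  shows "box_comp M (intv M (Some (psub M p e)) (Some (padd M p e)) Nn c) p"
proof -
  have e0: "ple M (pzero M) e" using big_nonneg[OF e(2)] .
  have zn: "ple M (pzero M) (numM M n)" for n by (rule T_num_nonneg[OF PM])
  have ne: "ple M (numM M n) e" for n using e(2) unfolding big_def ple_def by simp
  have bx: "ple M (psub M p e) (psub M p (numM M n)) \<and> ple M (psub M p (numM M n)) p \<and>
     ple M p (padd M p (numM M n)) \<and> ple M (padd M p (numM M n)) (padd M p e)" for n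
    using T_box[OF PM p e(1) numM_carr[OF PM] zn ne] .
  have bxe: "ple M (psub M p e) p \<and> ple M p (padd M p e)"
    using T_box[OF PM p e(1) e(1) e0 ple_refl] by simp
  have inj1: "inj (\<lambda>n. psub M p (numM M n))"
  proof (rule injI)
    fix n n' assume "psub M p (numM M n) = psub M p (numM M n')"
    then have "numM M n = numM M n'" using T_inj[OF PM p numM_carr[OF PM] numM_carr[OF PM]] by blast
    then show "n = n'" using T_num_inj[OF PM] by blast
  qed
  have inj2: "inj (\<lambda>n. padd M p (numM M n))"
  proof (rule injI)
    fix n n' assume "padd M p (numM M n) = padd M p (numM M n')"
    then have "numM M n = numM M n'" using T_inj[OF PM p numM_carr[OF PM] numM_carr[OF PM]] by blast
    then show "n = n'" using T_num_inj[OF PM] by blast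
  qed
  have s1: "range (\<lambda>n. psub M p (numM M n)) \<subseteq> {x \<in> carr M. lowb M (Some (psub M p e)) x \<and> ple M x p}"
  proof
    fix x assume "x \<in> range (\<lambda>n. psub M p (numM M n))"
    then obtain n where "x = psub M p (numM M n)" by blast
    then show "x \<in> {x \<in> carr M. lowb M (Some (psub M p e)) x \<and> ple M x p}"
      using bx[of n] carr_ops(4)[OF PM p numM_carr[OF PM]] by (simp add: lowb_def)
  qed
  have s2: "range (\<lambda>n. padd M p (numM M n)) \<subseteq> {x \<in> carr M. ple M p x \<and> uppb M (Some (padd M p e)) x}"
  proof
    fix x assume "x \<in> range (\<lambda>n. padd M p (numM M n))"
    then obtain n where "x = padd M p (numM M n)" by blast
    then show "x \<in> {x \<in> carr M. ple M p x \<and> uppb M (Some (padd M p e)) x}"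
      using bx[of n] carr_ops(3)[OF PM p numM_carr[OF PM]] by (simp add: uppb_def)
  qed
  have i1: "infinite {x \<in> carr M. lowb M (Some (psub M p e)) x \<and> ple M x p}"
    using infinite_super[OF s1 range_inj_infinite[OF inj1]] .
  have i2: "infinite {x \<in> carr M. ple M p x \<and> uppb M (Some (padd M p e)) x}"
    using infinite_super[OF s2 range_inj_infinite[OF inj2]] .
  have pin: "p \<in> intv M (Some (psub M p e)) (Some (padd M p e)) Nn c"
    unfolding intv_def lowb_def uppb_def using p bxe pc by simp
  have sc: "set_option (Some (psub M p e)) \<subseteq> carr M" "set_option (Some (padd M p e)) \<subseteq> carr M"
    using carr_ops[OF PM] p e(1) by auto
  show ?thesis unfolding box_comp_def
    by (intro exI[of _ "Some (psub M p e)"] exI[of _ "Some (padd M p e)"] exI[of _ Nn] exI[of _ c] conjI c sc refl pin i1 i2)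
qed

end



lemma lin_eval_simp: "lin_eval M (s, kk, cc, \<gamma>) x = padd M (ismul M s (THE y. y \<in> carr M \<and> padd M (smul M kk y) (numM M cc) = x)) \<gamma>"
  by (simp add: lin_eval_def)

lemma lin_facts:
  assumes PM: "presburger_model M" and x: "x \<in> carr M" "pcong M kk x (numM M cc)" and k: "cc < kk" and g: "\<gamma> \<in> carr M"
  shows "\<exists>y. y \<in> carr M \<and> padd M (smul M kk y) (numM M cc) = x \<and> lin_eval M (s, kk, cc, \<gamma>) x = padd M (ismul M s y) \<gamma>
     \<and> lin_eval M (s, kk, cc, \<gamma>) x \<in> carr M"
proof -
  define y0 where "y0 = (THE y. y \<in> carr M \<and> padd M (smul M kk y) (numM M cc) = x)"
  have y0: "y0 \<in> carr M \<and> padd M (smul M kk y0) (numM M cc) = x" using the_y(1)[OF PM x k] unfolding y0_def .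
  have L: "lin_eval M (s, kk, cc, \<gamma>) x = padd M (ismul M s y0) \<gamma>" unfolding lin_eval_simp y0_def ..
  have "padd M (ismul M s y0) \<gamma> \<in> carr M" using carr_ops(3)[OF PM ismul_carr[OF PM] g] y0 by simp
  then show ?thesis using y0 L by (intro exI[of _ y0]) simp
qed


theorem lemma3p3:
  fixes M :: "'m pstr" and M0 :: "'m set" and C :: "('m \<times> 'm) set" and a b :: 'm
  assumes "presburger_model M"
    and "saturated M"
    and "elem_sub M0 M"
    and "M0 \<prec> carr M"
    and "B_definable_11cell M M0 C"
    and "(a, b) \<in> C"
    and "tdim M M0 [a, b] = 2"
  shows "\<exists>X. definable2 M X \<and> box_around M X (a, b) \<and> X \<subseteq> C"
proof -
  note PM = assms(1)
  define F where "F = {S. S \<subseteq> set [a, b] \<and> dcl_indep M M0 S}"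
  have finF: "finite F" by (rule finite_subset[of _ "Pow (set [a, b])"]) (auto simp: F_def)
  have "{} \<in> F" unfolding F_def dcl_indep_def by simp
  then have neF: "card ` F \<noteq> {}" by blast
  have "Max (card ` F) = 2" using assms(7) unfolding tdim_def F_def .
  then have "2 \<in> card ` F" using Max_in[OF finite_imageI[OF finF] neF] by simp
  then obtain S where SF: "S \<in> F" and cS': "2 = card S" by (rule imageE)
  note cS = cS'[symmetric]
  have Ssub: "S \<subseteq> {a, b}" and Sind: "dcl_indep M M0 S" using SF unfolding F_def by simp_all
  have abne: "a \<noteq> b"
  proof
    assume "a = b"
    then have "S \<subseteq> {a}" using Ssub by simp
    then have "card S \<le> 1" using card_mono[of "{a}" S] by simp
    then show False using cS by simp
  qed
  have "card {a, b} = 2" using abne by simp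
  then have Sab: "S = {a, b}" using card_subset_eq[OF _ Ssub] cS by simp
  have "{a, b} - {a} = {b}" "{a, b} - {b} = {a}" using abne by auto
  then have ia: "a \<notin> dcl M (M0 \<union> {b})" and ib: "b \<notin> dcl M (M0 \<union> {a})"
    using Sind unfolding Sab dcl_indep_def by simp_all
  have na: "a \<notin> dcl M M0" using ia dcl_mono[of M0 "M0 \<union> {b}" M] by blast
  have dclA: "dcl M M0 \<subseteq> dcl M (M0 \<union> {a})" by (rule dcl_mono, rule Un_upper1)
  obtain D \<alpha>o \<beta>o N k where D1: "B_definable_1cell M M0 D"
    and l\<alpha>: "\<forall>f \<in> set_option \<alpha>o. B_linear_on M M0 D f"
    and l\<beta>: "\<forall>f \<in> set_option \<beta>o. B_linear_on M M0 D f" and kN: "k < N"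
    and Ceq: "C = {(x, t). x \<in> D \<and> t \<in> carr M \<and> lowf M \<alpha>o x t \<and> uppf M \<beta>o x t \<and>
                  pcong M N t (numM M k)}"
    using assms(5) unfolding B_definable_11cell_def by blast
  obtain \<alpha>D \<beta>D ND cD where cD: "cD < ND" and s\<alpha>D: "set_option \<alpha>D \<subseteq> dcl M M0"
    and s\<beta>D: "set_option \<beta>D \<subseteq> dcl M M0" and Deq: "D = intv M \<alpha>D \<beta>D ND cD"
    using D1 unfolding B_definable_1cell_def by blast
  have abC: "a \<in> D \<and> b \<in> carr M \<and> lowf M \<alpha>o a b \<and> uppf M \<beta>o a b \<and> pcong M N b (numM M k)"
    using assms(6) unfolding Ceq by simp
  have ac: "a \<in> carr M" and a\<alpha>: "lowb M \<alpha>D a" and a\<beta>: "uppb M \<beta>D a" and acong: "pcong M ND a (numM M cD)"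
    using abC unfolding Deq intv_def by simp_all
  have bc: "b \<in> carr M" and bcong: "pcong M N b (numM M k)" using abC by simp_all
  have aA: "a \<in> M0 \<union> {a}" by simp
  have zd: "pzero M \<in> dcl M M0" by (rule zero_dcl[OF PM])
  have zc: "pzero M \<in> carr M" using carr_ops[OF PM] by simp
  define d0 where "d0 = (if ple M (pzero M) a then psub M a (pzero M) else psub M (pzero M) a)"
  have h0: "d0 \<in> carr M \<and> big M d0"
  proof (cases "ple M (pzero M) a")
    case True
    then show ?thesis unfolding d0_def using far1[OF PM zd ac na True] carr_ops(4)[OF PM ac zc] by simp
  next
    case False
    then have "ple M a (pzero M)" using T_tri[OF PM ac zc] unfolding ple_def by blast
    then show ?thesis unfolding d0_def using False far2[OF PM zd ac na] carr_ops(4)[OF PM zc ac] by simp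
  qed
  have h\<alpha>D: "\<forall>u. \<alpha>D = Some u \<longrightarrow> psub M a u \<in> carr M \<and> big M (psub M a u)"
  proof (intro allI impI)
    fix u assume u: "\<alpha>D = Some u"
    then have ud: "u \<in> dcl M M0" using s\<alpha>D by simp
    then have uc: "u \<in> carr M" by (rule dclE)
    have "ple M u a" using a\<alpha> u unfolding lowb_def by simp
    then show "psub M a u \<in> carr M \<and> big M (psub M a u)" using far1[OF PM ud ac na] carr_ops(4)[OF PM ac uc] by simp
  qed
  have h\<beta>D: "\<forall>u. \<beta>D = Some u \<longrightarrow> psub M u a \<in> carr M \<and> big M (psub M u a)"
  proof (intro allI impI)
    fix u assume u: "\<beta>D = Some u"
    then have ud: "u \<in> dcl M M0" using s\<beta>D by simp
    then have uc: "u \<in> carr M" by (rule dclE)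
    have "ple M a u" using a\<beta> u unfolding uppb_def by simp
    then show "psub M u a \<in> carr M \<and> big M (psub M u a)" using far2[OF PM ud ac na] carr_ops(4)[OF PM uc ac] by simp
  qed
  have h\<alpha>: "\<forall>f. \<alpha>o = Some f \<longrightarrow> psub M b (lin_eval M f a) \<in> carr M \<and> big M (psub M b (lin_eval M f a))"
  proof (intro allI impI)
    fix f assume f: "\<alpha>o = Some f"
    obtain s kk cc \<gamma> where fe: "f = (s, kk, cc, \<gamma>)" by (cases f) blast
    have "B_linear_on M M0 D f" using l\<alpha> f by simp
    then have ck: "cc < kk" and gd: "\<gamma> \<in> dcl M M0" and pcD: "\<forall>x\<in>D. pcong M kk x (numM M cc)"
      unfolding fe B_linear_on_def by simp_all
    have gc: "\<gamma> \<in> carr M" using gd by (rule dclE)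
    have pa: "pcong M kk a (numM M cc)" using pcD abC by simp
    have le: "ple M (lin_eval M f a) b" using abC f unfolding lowf_def by simp
    obtain y where "lin_eval M (s, kk, cc, \<gamma>) a \<in> carr M" using lin_facts[OF PM ac pa ck gc, of s] by blast
    then have Lc: "lin_eval M f a \<in> carr M" using fe by simp
    have "big M (psub M b (lin_eval M (s, kk, cc, \<gamma>) a))"
      using far3[OF PM subsetD[OF dclA gd] aA ac pa ck bc ib] le fe by simp
    then show "psub M b (lin_eval M f a) \<in> carr M \<and> big M (psub M b (lin_eval M f a))"
      using fe carr_ops(4)[OF PM bc Lc] by simp
  qed
  have h\<beta>: "\<forall>f. \<beta>o = Some f \<longrightarrow> psub M (lin_eval M f a) b \<in> carr M \<and> big M (psub M (lin_eval M f a) b)"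
  proof (intro allI impI)
    fix f assume f: "\<beta>o = Some f"
    obtain s kk cc \<gamma> where fe: "f = (s, kk, cc, \<gamma>)" by (cases f) blast
    have "B_linear_on M M0 D f" using l\<beta> f by simp
    then have ck: "cc < kk" and gd: "\<gamma> \<in> dcl M M0" and pcD: "\<forall>x\<in>D. pcong M kk x (numM M cc)"
      unfolding fe B_linear_on_def by simp_all
    have gc: "\<gamma> \<in> carr M" using gd by (rule dclE)
    have pa: "pcong M kk a (numM M cc)" using pcD abC by simp
    have le: "ple M b (lin_eval M f a)" using abC f unfolding uppf_def by simp
    obtain y where "lin_eval M (s, kk, cc, \<gamma>) a \<in> carr M" using lin_facts[OF PM ac pa ck gc, of s] by blast
    then have Lc: "lin_eval M f a \<in> carr M" using fe by simp
    have "big M (psub M (lin_eval M (s, kk, cc, \<gamma>) a) b)"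
      using far4[OF PM subsetD[OF dclA gd] aA ac pa ck bc ib] le fe by simp
    then show "psub M (lin_eval M f a) b \<in> carr M \<and> big M (psub M (lin_eval M f a) b)"
      using fe carr_ops(4)[OF PM Lc bc] by simp
  qed
  define s\<alpha> where "s\<alpha> = (case \<alpha>o of None \<Rightarrow> 0 | Some f \<Rightarrow> fst f)"
  define s\<beta> where "s\<beta> = (case \<beta>o of None \<Rightarrow> 0 | Some f \<Rightarrow> fst f)"
  define m where "m = nat \<bar>s\<alpha>\<bar> + nat \<bar>s\<beta>\<bar> + 1"
  have m0: "0 < m" unfolding m_def by simp
  define ds where "ds = d0 # (case \<alpha>D of None \<Rightarrow> [] | Some u \<Rightarrow> [psub M a u])
     @ (case \<beta>D of None \<Rightarrow> [] | Some u \<Rightarrow> [psub M u a])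
     @ (case \<alpha>o of None \<Rightarrow> [] | Some f \<Rightarrow> [psub M b (lin_eval M f a)])
     @ (case \<beta>o of None \<Rightarrow> [] | Some f \<Rightarrow> [psub M (lin_eval M f a) b])"
  have dsok: "\<forall>d\<in>set ds. d \<in> carr M \<and> big M d"
    unfolding ds_def using h0 h\<alpha>D h\<beta>D h\<alpha> h\<beta>
    by (cases \<alpha>D; cases \<beta>D; cases \<alpha>o; cases \<beta>o) (simp_all del: prod.collapse)
  obtain e where ec: "e \<in> carr M" and be: "big M e" and eds: "\<forall>d\<in>set ds. ple M (smul M m e) d"
    using get_e[OF PM _ dsok m0] unfolding ds_def by blast
  have e0: "ple M (pzero M) e" using big_nonneg[OF PM be] .
  have g\<alpha>D: "\<And>u. \<alpha>D = Some u \<Longrightarrow> ple M (smul M m e) (psub M a u)" using eds unfolding ds_def by simp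
  have g\<beta>D: "\<And>u. \<beta>D = Some u \<Longrightarrow> ple M (smul M m e) (psub M u a)" using eds unfolding ds_def by simp
  have g\<alpha>: "\<And>f. \<alpha>o = Some f \<Longrightarrow> ple M (smul M m e) (psub M b (lin_eval M f a))" using eds unfolding ds_def by simp
  have g\<beta>: "\<And>f. \<beta>o = Some f \<Longrightarrow> ple M (smul M m e) (psub M (lin_eval M f a) b)" using eds unfolding ds_def by simp
  define S1 where "S1 = intv M (Some (psub M a e)) (Some (padd M a e)) ND cD"
  define S2 where "S2 = intv M (Some (psub M b e)) (Some (padd M b e)) N k"
  have box: "box_around M (S1 \<times> S2) (a, b)"
    unfolding box_around_def fst_conv snd_conv
    apply (rule exI[of _ S1], rule exI[of _ S2])
    unfolding S1_def S2_def
    using box_ok[OF PM ac ec be acong cD] box_ok[OF PM bc ec be bcong kN] by simp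
  define en where "en = (\<lambda>_::nat. pzero M)(2 := psub M a e, 3 := padd M a e, 4 := psub M b e, 5 := padd M b e)"
  define \<phi> where "\<phi> = Conj (Le (V 2) (V 0)) (Conj (Le (V 0) (V 3)) (Conj (Cg ND (V 0) (numT cD))
     (Conj (Le (V 4) (V 1)) (Conj (Le (V 1) (V 5)) (Cg N (V 1) (numT k))))))"
  have rng: "range en \<subseteq> carr M" unfolding en_def using carr_ops[OF PM] ac bc ec by auto
  have semphi: "sat M \<phi> (en(0 := x, 1 := y)) = (ple M (psub M a e) x \<and> ple M x (padd M a e) \<and> pcong M ND x (numM M cD)
     \<and> ple M (psub M b e) y \<and> ple M y (padd M b e) \<and> pcong M N y (numM M k))" for x y
    unfolding \<phi>_def en_def by simp
  have "S1 \<times> S2 = {(x, y). x \<in> carr M \<and> y \<in> carr M \<and> sat M \<phi> (en(0 := x, 1 := y))}"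
    unfolding semphi S1_def S2_def intv_def lowb_def uppb_def by auto
  then have def2: "definable2 M (S1 \<times> S2)" unfolding definable2_def using rng by blast
  have sub: "S1 \<times> S2 \<subseteq> C"
  proof
    fix p assume "p \<in> S1 \<times> S2"
    then obtain x t where pe: "p = (x, t)" and x: "x \<in> S1" and t: "t \<in> S2" by blast
    have xc: "x \<in> carr M" and xl: "ple M (psub M a e) x" and xu: "ple M x (padd M a e)"
      and xcong: "pcong M ND x (numM M cD)"
      using x unfolding S1_def intv_def lowb_def uppb_def by simp_all
    have tc: "t \<in> carr M" and tl: "ple M (psub M b e) t" and tu: "ple M t (padd M b e)"
      and tcong: "pcong M N t (numM M k)"
      using t unfolding S2_def intv_def lowb_def uppb_def by simp_all
    have lx: "lowb M \<alpha>D x"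
    proof (cases \<alpha>D)
      case (Some u)
      then have uc: "u \<in> carr M" using s\<alpha>D dclE by (metis option.set_intros subsetD)
      show ?thesis using Some T_lowD[OF PM m0 ac uc ec xc g\<alpha>D[OF Some] e0 xl] unfolding lowb_def by simp
    qed (simp add: lowb_def)
    have ux: "uppb M \<beta>D x"
    proof (cases \<beta>D)
      case (Some u)
      then have uc: "u \<in> carr M" using s\<beta>D dclE by (metis option.set_intros subsetD)
      show ?thesis using Some T_uppD[OF PM m0 ac uc ec xc g\<beta>D[OF Some] e0 xu] unfolding uppb_def by simp
    qed (simp add: uppb_def)
    have xD: "x \<in> D" unfolding Deq intv_def using xc lx ux xcong by simp
    have lf: "lowf M \<alpha>o x t"
    proof (cases \<alpha>o)
      case (Some f)
      obtain s kk cc \<gamma> where fe: "f = (s, kk, cc, \<gamma>)" by (cases f) blast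
      have "B_linear_on M M0 D f" using l\<alpha> Some by simp
      then have ck: "cc < kk" and gd: "\<gamma> \<in> dcl M M0" and pcD: "\<forall>x\<in>D. pcong M kk x (numM M cc)"
        unfolding fe B_linear_on_def by simp_all
      have gc: "\<gamma> \<in> carr M" using gd by (rule dclE)
      have pa: "pcong M kk a (numM M cc)" using pcD abC by simp
      have px: "pcong M kk x (numM M cc)" using pcD xD by simp
      obtain ya where ya: "ya \<in> carr M" "padd M (smul M kk ya) (numM M cc) = a"
        "lin_eval M (s, kk, cc, \<gamma>) a = padd M (ismul M s ya) \<gamma>"
        using lin_facts[OF PM ac pa ck gc, of s] by blast
      obtain yx where yx: "yx \<in> carr M" "padd M (smul M kk yx) (numM M cc) = x"
        "lin_eval M (s, kk, cc, \<gamma>) x = padd M (ismul M s yx) \<gamma>"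
        using lin_facts[OF PM xc px ck gc, of s] by blast
      have kk1: "1 \<le> kk" using ck by simp
      have ms: "\<bar>s\<bar> + 1 \<le> int m" unfolding m_def s\<alpha>_def using Some fe by simp
      have "ple M (smul M m e) (psub M b (padd M (ismul M s ya) \<gamma>))" using g\<alpha>[OF Some] fe ya(3) by simp
      then have "ple M (padd M (ismul M s yx) \<gamma>) t"
        using T_lowf[OF PM kk1 ms ac xc ya(1) yx(1) gc bc tc ec ya(2) yx(2) _ xl xu tl e0] by simp
      then show ?thesis unfolding lowf_def using Some fe yx(3) by simp
    qed (simp add: lowf_def)
    have uf: "uppf M \<beta>o x t"
    proof (cases \<beta>o)
      case (Some f)
      obtain s kk cc \<gamma> where fe: "f = (s, kk, cc, \<gamma>)" by (cases f) blast
      have "B_linear_on M M0 D f" using l\<beta> Some by simp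
      then have ck: "cc < kk" and gd: "\<gamma> \<in> dcl M M0" and pcD: "\<forall>x\<in>D. pcong M kk x (numM M cc)"
        unfolding fe B_linear_on_def by simp_all
      have gc: "\<gamma> \<in> carr M" using gd by (rule dclE)
      have pa: "pcong M kk a (numM M cc)" using pcD abC by simp
      have px: "pcong M kk x (numM M cc)" using pcD xD by simp
      obtain ya where ya: "ya \<in> carr M" "padd M (smul M kk ya) (numM M cc) = a"
        "lin_eval M (s, kk, cc, \<gamma>) a = padd M (ismul M s ya) \<gamma>"
        using lin_facts[OF PM ac pa ck gc, of s] by blast
      obtain yx where yx: "yx \<in> carr M" "padd M (smul M kk yx) (numM M cc) = x"
        "lin_eval M (s, kk, cc, \<gamma>) x = padd M (ismul M s yx) \<gamma>"
        using lin_facts[OF PM xc px ck gc, of s] by blast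
      have kk1: "1 \<le> kk" using ck by simp
      have ms: "\<bar>s\<bar> + 1 \<le> int m" unfolding m_def s\<beta>_def using Some fe by simp
      have "ple M (smul M m e) (psub M (padd M (ismul M s ya) \<gamma>) b)" using g\<beta>[OF Some] fe ya(3) by simp
      then have "ple M t (padd M (ismul M s yx) \<gamma>)"
        using T_uppf[OF PM kk1 ms ac xc ya(1) yx(1) gc bc tc ec ya(2) yx(2) _ xl xu tu e0] by simp
      then show ?thesis unfolding uppf_def using Some fe yx(3) by simp
    qed (simp add: uppf_def)
    show "p \<in> C" unfolding Ceq pe using xD tc lf uf tcong by simp
  qed
  show ?thesis using def2 box sub by blast
qed


end
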